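(* For $u,v,u',v'\in\mathbb{C}$, the formal deformations $(\llbracket\cdot,\cdot\rrbracket^{u,v}_n)_{n\ge0}$ and $(\llbracket\cdot,\cdot\rrbracket^{u',v'}_n)_{n\ge0}$ of $\mathcal K$ are modular-isomorphic if and only if $(u,v)=(u',v')$.
   Context: Let $\mathcal K=\mathbb{C}[E_4,E_6,A,A^{-1},B]$ be the localization at $A$ of the polynomial algebra $\mathbb{C}[E_4,E_6,A,B]$ in algebraically independent variables, bigraded by weight and index ($E_4$: $(4,0)$, $E_6$: $(6,0)$, $A$: $(-2,1)$, $B$: $(0,1)$), with components $\mathcal K_{k,p}$. Set $F_2=BA^{-1}$. For $u\in\mathbb{C}$, $\partial_u$ is the derivation of $\mathcal K$ with $\partial_u(E_4)=-\frac13(E_6-E_4F_2)$, $\partial_u(E_6)=-\frac12(E_4^2-E_6F_2)$, $\partial_u(F_2)=-\frac1{12}(E_4-F_2^2)$, $\partial_u(A)=uB$. For $f\in\mathcal K_{k,p}$, $g\in\mathcal K_{\ell,q}$: $\llbracket f,g\rrbracket^{u,v}_n=\sum_{r=0}^n(-1)^r\binom{k+vp+n-1}{n-r}\binom{\ell+vq+n-1}{r}\partial_u^r(f)\partial_u^{n-r}(g)$, extended bilinearly; these are formal deformations of $\mathcal K$. Two formal deformations $(\mu_n)_n$, $(\nu_n)_n$ of $\mathcal K$ are modular-isomorphic if there is a $\mathbb{C}$-linear bijection $\phi:\mathcal K\to\mathcal K$ mapping each $\mathcal K_{k,p}$ into $\mathcal K_{k,p}$ with $\phi(\mu_n(f,g))=\nu_n(\phi(f),\phi(g))$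 for all $n\ge0$, $f,g\in\mathcal K$. *)

theory Defs
  imports Complex_Main "HOL-Library.Poly_Mapping" "HOL-Library.Product_Plus"
begin

text \<open>Monomials E4^a E6^b A^c B^d are encoded by exponent vectors (a,b,c,d),
  with c an integer (localisation at A). The algebra K is the monoid algebra
  of these exponents over the complex numbers.\<close>

type_synonym mono = "nat \<times> nat \<times> int \<times> nat"
type_synonym K = "mono \<Rightarrow>\<^sub>0 complex"

definition wt :: "mono \<Rightarrow> int" where
  "wt m = (case m of (a,b,c,d) \<Rightarrow> 4 * int a + 6 * int b - 2 * c)"

definition ind :: "mono \<Rightarrow> int" where
  "ind m = (case m of (a,b,c,d) \<Rightarrow> c + int d)"

definition cst :: "complex \<Rightarrow> K" where
  "cst c = Poly_Mapping.single 0 c"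

definition E4 :: K where "E4 = Poly_Mapping.single (1,0,0,0) 1"
definition E6 :: K where "E6 = Poly_Mapping.single (0,1,0,0) 1"
definition A :: K where "A = Poly_Mapping.single (0,0,1,0) 1"
definition Ainv :: K where "Ainv = Poly_Mapping.single (0,0,-1,0) 1"
definition B :: K where "B = Poly_Mapping.single (0,0,0,1) 1"
definition F2 :: K where "F2 = B * Ainv"

definition Kc :: "int \<Rightarrow> int \<Rightarrow> K set" where
  "Kc k p = {f. \<forall>m \<in> Poly_Mapping.keys f. wt m = k \<and> ind m = p}"

definition hcomp :: "int \<Rightarrow> int \<Rightarrow> K \<Rightarrow> K" where
  "hcomp k p f = (\<Sum>m \<in> {m \<in> Poly_Mapping.keys f. wt m = k \<and> ind m = p}. Poly_Mapping.single m (Poly_Mapping.lookup f m))"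

definition degs :: "K \<Rightarrow> (int \<times> int) set" where
  "degs f = (\<lambda>m. (wt m, ind m)) ` Poly_Mapping.keys f"

definition is_derivation :: "(K \<Rightarrow> K) \<Rightarrow> bool" where
  "is_derivation D \<longleftrightarrow> (\<forall>f g. D (f + g) = D f + D g) \<and> (\<forall>f g. D (f * g) = f * D g + g * D f)
     \<and> (\<forall>c. D (cst c) = 0)"

definition dU :: "complex \<Rightarrow> K \<Rightarrow> K" where
  "dU u = (THE D. is_derivation D
      \<and> D E4 = - cst (1/3) * (E6 - E4 * F2)
      \<and> D E6 = - cst (1/2) * (E4^2 - E6 * F2)
      \<and> D F2 = - cst (1/12) * (E4 - F2^2)
      \<and> D A = cst u * B)"

definition brh :: "complex \<Rightarrow> complex \<Rightarrow> nat \<Rightarrow> int \<Rightarrow> int \<Rightarrow> int \<Rightarrow> int \<Rightarrow> K \<Rightarrow> K \<Rightarrow> K" where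
  "brh u v n k p l q f g = (\<Sum>r=0..n. cst ((-1)^r
       * ((of_int k + v * of_int p + of_nat n - 1) gchoose (n - r))
       * ((of_int l + v * of_int q + of_nat n - 1) gchoose r))
       * ((dU u ^^ r) f) * ((dU u ^^ (n - r)) g))"

definition br :: "complex \<Rightarrow> complex \<Rightarrow> nat \<Rightarrow> K \<Rightarrow> K \<Rightarrow> K" where
  "br u v n f g = (\<Sum>(k,p) \<in> degs f. \<Sum>(l,q) \<in> degs g.
       brh u v n k p l q (hcomp k p f) (hcomp l q g))"

definition modular_iso :: "(nat \<Rightarrow> K \<Rightarrow> K \<Rightarrow> K) \<Rightarrow> (nat \<Rightarrow> K \<Rightarrow> K \<Rightarrow> K) \<Rightarrow> bool" where
  "modular_iso \<mu> \<nu> \<longleftrightarrow> (\<exists>\<phi>. bij \<phi>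
      \<and> (\<forall>f g. \<phi> (f + g) = \<phi> f + \<phi> g) \<and> (\<forall>c f. \<phi> (cst c * f) = cst c * \<phi> f)
      \<and> (\<forall>k p f. f \<in> Kc k p \<longrightarrow> \<phi> f \<in> Kc k p)
      \<and> (\<forall>n f g. \<phi> (\<mu> n f g) = \<nu> n (\<phi> f) (\<phi> g)))"

end

theory Submission
  imports Defs
begin

definition M :: "mono \<Rightarrow> K" where "M m = Poly_Mapping.single m 1"

lemma M_mult: "M m * M n = M (m + n)" by (simp add: M_def mult_single)
lemma zero_mono: "(0::mono) = (0,0,0,0)" by (simp add: zero_prod_def)
lemma M_zero: "M (0,0,0,0) = 1" by (metis M_def single_one zero_mono)
lemma cst_single: "cst c * Poly_Mapping.single m d = Poly_Mapping.single m (c * d)"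
  by (simp add: cst_def mult_single)
lemma single_cst: "Poly_Mapping.single m d * cst c = Poly_Mapping.single m (d * c)"
  by (simp add: cst_def mult_single)
lemma cst_add: "cst (a + b) = cst a + cst b" by (simp add: cst_def single_add)
lemma cst_mult: "cst (a * b) = cst a * cst b" by (simp add: cst_def mult_single)
lemma cst_0[simp]: "cst 0 = 0" by (simp add: cst_def)
lemma cst_1[simp]: "cst 1 = 1" by (simp add: cst_def)
lemma cst_numeral[simp]: "cst (numeral n) = numeral n" by (simp add: cst_def)
lemma cst_of_nat[simp]: "cst (of_nat n) = of_nat n" by (simp add: cst_def)
lemma cst_uminus: "cst (- a) = - cst a" by (simp add: cst_def single_uminus)
lemma cst_diff: "cst (a - b) = cst a - cst b" by (simp add: cst_def single_diff)
lemma cst_M: "cst c * M m = Poly_Mapping.single m c" by (simp add: M_def cst_single)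

lemma expand: "f = (\<Sum>m\<in>Poly_Mapping.keys f. cst (Poly_Mapping.lookup f m) * M m)"
proof (rule poly_mapping_eqI)
  fix k
  have "Poly_Mapping.lookup (\<Sum>m\<in>Poly_Mapping.keys f. cst (Poly_Mapping.lookup f m) * M m) k
     = (\<Sum>m\<in>Poly_Mapping.keys f. (Poly_Mapping.lookup f m when m = k))"
    by (simp add: lookup_sum cst_M lookup_single)
  also have "\<dots> = Poly_Mapping.lookup f k"
    by (cases "k \<in> Poly_Mapping.keys f") (auto simp: when_def in_keys_iff)
  finally show "Poly_Mapping.lookup f k = Poly_Mapping.lookup (\<Sum>m\<in>Poly_Mapping.keys f. cst (Poly_Mapping.lookup f m) * M m) k" by simp
qed

definition lin :: "(mono \<Rightarrow> K) \<Rightarrow> K \<Rightarrow> K" where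
  "lin h f = (\<Sum>m\<in>Poly_Mapping.keys f. cst (Poly_Mapping.lookup f m) * h m)"

lemma lin_superset:
  assumes "finite S" "Poly_Mapping.keys f \<subseteq> S"
  shows "lin h f = (\<Sum>m\<in>S. cst (Poly_Mapping.lookup f m) * h m)"
  unfolding lin_def
  by (rule sum.mono_neutral_left) (use assms in \<open>auto simp: in_keys_iff\<close>)

lemma lin_add: "lin h (f + g) = lin h f + lin h g"
proof -
  let ?S = "Poly_Mapping.keys f \<union> Poly_Mapping.keys g"
  have "lin h (f+g) = (\<Sum>m\<in>?S. cst (Poly_Mapping.lookup (f+g) m) * h m)"
    by (rule lin_superset) (auto simp: keys_add)
  also have "\<dots> = (\<Sum>m\<in>?S. cst (Poly_Mapping.lookup f m) * h m) + (\<Sum>m\<in>?S. cst (Poly_Mapping.lookup g m) * h m)"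
    by (simp add: lookup_add cst_add distrib_right sum.distrib)
  also have "\<dots> = lin h f + lin h g"
    using lin_superset[of ?S f h] lin_superset[of ?S g h] by simp
  finally show ?thesis .
qed

lemma lin_single: "lin h (Poly_Mapping.single m c) = cst c * h m"
  by (cases "c = 0") (auto simp: lin_def)

lemma lin_zero: "lin h 0 = 0" by (simp add: lin_def)

lemma lin_sum: "finite S \<Longrightarrow> lin h (\<Sum>i\<in>S. F i) = (\<Sum>i\<in>S. lin h (F i))"
  by (induction S rule: finite_induct) (auto simp: lin_zero lin_add)

definition T1c :: "mono \<Rightarrow> K" where
  "T1c m = (case m of (a,b,c,d) \<Rightarrow> if a = 0 then 0 else cst (of_nat a) * M (a-1,b,c,d))"
definition T2c :: "mono \<Rightarrow> K" where
  "T2c m = (case m of (a,b,c,d) \<Rightarrow> if b = 0 then 0 else cst (of_nat b) * M (a,b-1,c,d))"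
definition T3c :: "mono \<Rightarrow> K" where
  "T3c m = (case m of (a,b,c,d) \<Rightarrow> cst (of_int c) * M (a,b,c-1,d))"
definition T4c :: "mono \<Rightarrow> K" where
  "T4c m = (case m of (a,b,c,d) \<Rightarrow> if d = 0 then 0 else cst (of_nat d) * M (a,b,c,d-1))"

lemma T1c_leib: "T1c (m + n) = M m * T1c n + M n * T1c m"
proof -
  obtain a b c d where m: "m = (a,b,c,d)" by (cases m) auto
  obtain a' b' c' d' where n: "n = (a',b',c',d')" by (cases n) auto
  show ?thesis
    unfolding m n
    by (cases a; cases a') (simp_all add: T1c_def M_mult cst_add algebra_simps)
qed

lemma T2c_leib: "T2c (m + n) = M m * T2c n + M n * T2c m"
proof -
  obtain a b c d where m: "m = (a,b,c,d)" by (cases m) auto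
  obtain a' b' c' d' where n: "n = (a',b',c',d')" by (cases n) auto
  show ?thesis
    unfolding m n
    by (cases b; cases b') (simp_all add: T2c_def M_mult cst_add algebra_simps)
qed

lemma T4c_leib: "T4c (m + n) = M m * T4c n + M n * T4c m"
proof -
  obtain a b c d where m: "m = (a,b,c,d)" by (cases m) auto
  obtain a' b' c' d' where n: "n = (a',b',c',d')" by (cases n) auto
  show ?thesis
    unfolding m n
    by (cases d; cases d') (simp_all add: T4c_def M_mult cst_add algebra_simps)
qed

lemma T3c_leib: "T3c (m + n) = M m * T3c n + M n * T3c m"
proof -
  obtain a b c d where m: "m = (a,b,c,d)" by (cases m) auto
  obtain a' b' c' d' where n: "n = (a',b',c',d')" by (cases n) auto
  show ?thesis
    unfolding m n
    by (simp add: T3c_def M_mult cst_add algebra_simps)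
qed

definition P4 :: K where "P4 = - cst (1/3) * (E6 - E4 * F2)"
definition P6 :: K where "P6 = - cst (1/2) * (E4^2 - E6 * F2)"
definition PF :: K where "PF = - cst (1/12) * (E4 - F2^2)"
definition PA :: "complex \<Rightarrow> K" where "PA u = cst u * B"
definition PB :: "complex \<Rightarrow> K" where "PB u = F2 * PA u + A * PF"

definition Dm :: "complex \<Rightarrow> mono \<Rightarrow> K" where
  "Dm u m = T1c m * P4 + T2c m * P6 + T3c m * PA u + T4c m * PB u"

lemma Dm_leib: "Dm u (m + n) = M m * Dm u n + M n * Dm u m"
  unfolding Dm_def T1c_leib T2c_leib T3c_leib T4c_leib by (simp add: algebra_simps)

definition Dlin :: "complex \<Rightarrow> K \<Rightarrow> K" where "Dlin u = lin (Dm u)"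

lemma Dlin_add: "Dlin u (f + g) = Dlin u f + Dlin u g" by (simp add: Dlin_def lin_add)
lemma Dlin_single: "Dlin u (Poly_Mapping.single m c) = cst c * Dm u m" by (simp add: Dlin_def lin_single)
lemma Dlin_sum: "finite S \<Longrightarrow> Dlin u (\<Sum>i\<in>S. F i) = (\<Sum>i\<in>S. Dlin u (F i))"
  by (simp add: Dlin_def lin_sum)

lemma expand_single: "(f::K) = (\<Sum>m\<in>Poly_Mapping.keys f. Poly_Mapping.single m (Poly_Mapping.lookup f m))"
  using expand[of f] by (simp add: cst_M)

lemma Dlin_mult: "Dlin u (f * g) = f * Dlin u g + g * Dlin u f"
proof -
  let ?F = "Poly_Mapping.keys f" and ?G = "Poly_Mapping.keys g"
  let ?f = "Poly_Mapping.lookup f" and ?g = "Poly_Mapping.lookup g"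
  have fg: "f * g = (\<Sum>m\<in>?F. \<Sum>n\<in>?G. Poly_Mapping.single (m+n) (?f m * ?g n))"
    apply (subst expand_single[of f], subst expand_single[of g])
    by (simp add: sum_product mult_single)
  have "Dlin u (f * g) = (\<Sum>m\<in>?F. \<Sum>n\<in>?G. cst (?f m * ?g n) * Dm u (m+n))"
    by (simp add: fg Dlin_sum Dlin_single)
  also have "\<dots> = (\<Sum>m\<in>?F. \<Sum>n\<in>?G. (cst (?f m) * M m) * (cst (?g n) * Dm u n))
                 + (\<Sum>m\<in>?F. \<Sum>n\<in>?G. (cst (?g n) * M n) * (cst (?f m) * Dm u m))"
    by (simp add: Dm_leib cst_mult algebra_simps sum.distrib)
  also have "\<dots> = f * Dlin u g + g * Dlin u f"
  proof -
    have e1: "f * Dlin u g = (\<Sum>m\<in>?F. cst (?f m) * M m) * (\<Sum>n\<in>?G. cst (?g n) * Dm u n)"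
      unfolding Dlin_def lin_def by (rule arg_cong[where f="\<lambda>x. x * _"]) (rule expand)
    have e2: "g * Dlin u f = (\<Sum>n\<in>?G. cst (?g n) * M n) * (\<Sum>m\<in>?F. cst (?f m) * Dm u m)"
      unfolding Dlin_def lin_def by (rule arg_cong[where f="\<lambda>x. x * _"]) (rule expand)
    show ?thesis unfolding e1 e2 sum_product
      by (simp add: sum.swap[of _ ?G ?F])
  qed
  finally show ?thesis .
qed

lemma Dlin_cst: "Dlin u (cst c) = 0"
  by (simp add: cst_def Dlin_single Dm_def T1c_def T2c_def T3c_def T4c_def zero_mono)

lemma E4_M: "E4 = M (1,0,0,0)" by (simp add: E4_def M_def)
lemma E6_M: "E6 = M (0,1,0,0)" by (simp add: E6_def M_def)
lemma A_M: "A = M (0,0,1,0)" by (simp add: A_def M_def)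
lemma Ainv_M: "Ainv = M (0,0,-1,0)" by (simp add: Ainv_def M_def)
lemma B_M: "B = M (0,0,0,1)" by (simp add: B_def M_def)
lemma F2_M: "F2 = M (0,0,-1,1)" by (simp add: F2_def B_M Ainv_M M_mult)

lemma M_mult2: "M m * (x * M n) = x * M (m + n)"
  by (metis M_mult mult.left_commute)

lemma Dlin_M: "Dlin u (M m) = Dm u m" by (simp add: M_def Dlin_single)

lemma D_E4: "Dlin u E4 = P4"
  by (simp add: E4_M Dlin_M Dm_def cst_uminus T1c_def T2c_def T3c_def T4c_def M_zero)
lemma D_E6: "Dlin u E6 = P6"
  by (simp add: E6_M Dlin_M Dm_def cst_uminus T1c_def T2c_def T3c_def T4c_def M_zero)
lemma D_A: "Dlin u A = PA u"
  by (simp add: A_M Dlin_M Dm_def cst_uminus T1c_def T2c_def T3c_def T4c_def M_zero)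
lemma D_F2: "Dlin u F2 = PF"
proof -
  have "Dlin u F2 = - (M (0,0,-2,1) * PA u) + M (0,0,-1,0) * PB u"
    by (simp add: F2_M Dlin_M Dm_def cst_uminus T1c_def T2c_def T3c_def T4c_def M_zero)
  also have "\<dots> = PF"
    by (simp add: PA_def PB_def F2_M A_M B_M algebra_simps M_mult M_mult2 M_zero)
  finally show ?thesis .
qed

lemma der_zero: assumes "is_derivation D" shows "D 0 = 0"
proof -
  have "D (0 + 0) = D 0 + D 0" using assms unfolding is_derivation_def by blast
  thus ?thesis by simp
qed
lemma der_add: "is_derivation D \<Longrightarrow> D (f + g) = D f + D g"
  unfolding is_derivation_def by blast
lemma der_mult: "is_derivation D \<Longrightarrow> D (f * g) = f * D g + g * D f"
  unfolding is_derivation_def by blast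
lemma der_cst: "is_derivation D \<Longrightarrow> D (cst c) = 0"
  unfolding is_derivation_def by blast
lemma der_one: "is_derivation D \<Longrightarrow> D 1 = 0"
  using der_cst[of D 1] by simp
lemma der_smult: assumes "is_derivation D" shows "D (cst c * f) = cst c * D f"
  by (simp add: der_mult[OF assms] der_cst[OF assms])
lemma der_sum: assumes "is_derivation D" shows "finite S \<Longrightarrow> D (\<Sum>i\<in>S. F i) = (\<Sum>i\<in>S. D (F i))"
  by (induction S rule: finite_induct) (auto simp: der_zero[OF assms] der_add[OF assms])
lemma der_uminus: assumes "is_derivation D" shows "D (- f) = - D f"
proof -
  have "D f + D (- f) = 0" using der_add[OF assms, of f "- f"] der_zero[OF assms] by simp
  from minus_unique[OF this] show ?thesis by simp
qed
lemma der_diff: assumes "is_derivation D" shows "D (f - g) = D f - D g"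
proof -
  have "D (f - g) = D (f + - g)" by simp
  also have "\<dots> = D f + D (- g)" by (rule der_add[OF assms])
  also have "\<dots> = D f - D g" by (simp add: der_uminus[OF assms])
  finally show ?thesis .
qed

lemma Dlin_der: "is_derivation (Dlin u)"
  unfolding is_derivation_def by (simp add: Dlin_add Dlin_mult Dlin_cst)

lemma AAinv: "A * Ainv = 1" by (simp add: A_M Ainv_M M_mult M_zero)
lemma B_F2A: "B = F2 * A" by (simp add: A_M B_M F2_M M_mult)

lemma M_E4pow: "M (n,0,0,0) = E4 ^ n"
  unfolding eq_commute[of "M _"] by (induction n) (simp_all add: M_zero E4_M M_mult)
lemma M_E6pow: "M (0,n,0,0) = E6 ^ n"
  unfolding eq_commute[of "M _"] by (induction n) (simp_all add: M_zero E6_M M_mult)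
lemma M_Bpow: "M (0,0,0,n) = B ^ n"
  unfolding eq_commute[of "M _"] by (induction n) (simp_all add: M_zero B_M M_mult)
lemma M_Apow: "M (0,0,int n,0) = A ^ n"
  unfolding eq_commute[of "M _"] by (induction n) (simp_all add: M_zero A_M M_mult)
lemma M_Ainvpow: "M (0,0,- int n,0) = Ainv ^ n"
  unfolding eq_commute[of "M _"] by (induction n) (simp_all add: M_zero Ainv_M M_mult algebra_simps)
lemma M_split: "M (a,b,c,d) = M (a,0,0,0) * M (0,b,0,0) * M (0,0,c,0) * M (0,0,0,d)"
  by (simp add: M_mult)

lemma der_Ainv: assumes "is_derivation D" shows "D Ainv = - (Ainv * Ainv * D A)"
proof -
  have "0 = D (A * Ainv)" using der_one[OF assms] by (simp add: AAinv)
  also have "\<dots> = A * D Ainv + Ainv * D A" by (simp add: der_mult[OF assms])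
  finally have "Ainv * (A * D Ainv + Ainv * D A) = 0" by simp
  moreover have "Ainv * (A * D Ainv + Ainv * D A) = D Ainv + Ainv * Ainv * D A"
    using AAinv by (simp add: distrib_left mult.assoc[symmetric] mult.commute[of Ainv A])
  ultimately have "D Ainv + Ainv * Ainv * D A = 0" by simp
  thus ?thesis by (simp add: eq_neg_iff_add_eq_0)
qed

lemma der_unique:
  assumes D1: "is_derivation D1" and D2: "is_derivation D2"
    and e4: "D1 E4 = D2 E4" and e6: "D1 E6 = D2 E6" and f2: "D1 F2 = D2 F2" and a: "D1 A = D2 A"
  shows "D1 = D2"
proof -
  let ?S = "{f. D1 f = D2 f}"
  have mult: "D1 (f * g) = D2 (f * g)" if "D1 f = D2 f" "D1 g = D2 g" for f g
    using that by (simp add: der_mult[OF D1] der_mult[OF D2])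
  have pow: "D1 (f ^ n) = D2 (f ^ n)" if "D1 f = D2 f" for f n
    by (induction n) (simp_all add: der_one[OF D1] der_one[OF D2] mult that)
  have b: "D1 B = D2 B" unfolding B_F2A using mult f2 a by blast
  have ai: "D1 Ainv = D2 Ainv" using der_Ainv[OF D1] der_Ainv[OF D2] a by simp
  have Mc: "D1 (M (0,0,c,0)) = D2 (M (0,0,c,0))" for c
  proof (cases "c \<ge> 0")
    case True
    then obtain n where "c = int n" by (metis nonneg_eq_int)
    then show ?thesis using pow[OF a] by (simp add: M_Apow)
  next
    case False
    then obtain n where "c = - int n" by (metis linorder_not_le neg_int_cases less_le)
    then show ?thesis using pow[OF ai] by (simp add: M_Ainvpow)
  qed
  have MM: "D1 (M m) = D2 (M m)" for m
  proof -
    obtain a' b' c' d' where m: "m = (a',b',c',d')" by (cases m) auto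
    have e: "M m = E4^a' * E6^b' * M(0,0,c',0) * B^d'"
      unfolding m by (subst M_split, unfold M_E4pow M_E6pow M_Bpow) (rule refl)
    show ?thesis unfolding e
      by (intro mult pow Mc e4 e6 b)
  qed
  show ?thesis
  proof
    fix f
    have "D1 f = D1 (\<Sum>m\<in>Poly_Mapping.keys f. cst (Poly_Mapping.lookup f m) * M m)"
      by (subst expand[of f]) simp
    also have "\<dots> = D2 (\<Sum>m\<in>Poly_Mapping.keys f. cst (Poly_Mapping.lookup f m) * M m)"
      by (simp add: der_sum[OF D1] der_smult[OF D1] der_sum[OF D2] der_smult[OF D2] MM)
    also have "\<dots> = D2 f" by (subst (2) expand[of f]) simp
    finally show "D1 f = D2 f" .
  qed
qed

lemma dU_eq: "dU u = Dlin u"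
  unfolding dU_def
proof (rule the_equality)
  show "is_derivation (Dlin u) \<and> Dlin u E4 = - cst (1 / 3) * (E6 - E4 * F2) \<and>
    Dlin u E6 = - cst (1 / 2) * (E4\<^sup>2 - E6 * F2) \<and>
    Dlin u F2 = - cst (1 / 12) * (E4 - F2\<^sup>2) \<and> Dlin u A = cst u * B"
    using Dlin_der D_E4 D_E6 D_F2 D_A by (simp add: P4_def P6_def PF_def PA_def)
next
  fix D assume "is_derivation D \<and> D E4 = - cst (1 / 3) * (E6 - E4 * F2) \<and>
    D E6 = - cst (1 / 2) * (E4\<^sup>2 - E6 * F2) \<and>
    D F2 = - cst (1 / 12) * (E4 - F2\<^sup>2) \<and> D A = cst u * B"
  then show "D = Dlin u"
    using Dlin_der D_E4 D_E6 D_F2 D_A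
    by (intro der_unique) (simp_all add: P4_def P6_def PF_def PA_def)
qed

lemma wt_add: "wt (m + n) = wt m + wt n"
  by (cases m; cases n) (auto simp: wt_def)
lemma ind_add: "ind (m + n) = ind m + ind n"
  by (cases m; cases n) (auto simp: ind_def)

lemma M_Kc: "M m \<in> Kc (wt m) (ind m)" by (simp add: Kc_def M_def)
lemma Kc_zero: "0 \<in> Kc k p" by (simp add: Kc_def)
lemma Kc_add: "f \<in> Kc k p \<Longrightarrow> g \<in> Kc k p \<Longrightarrow> f + g \<in> Kc k p"
  using keys_add[of f g] unfolding Kc_def by auto
lemma Kc_uminus: "f \<in> Kc k p \<Longrightarrow> - f \<in> Kc k p"
  unfolding Kc_def by simp
lemma Kc_diff: "f \<in> Kc k p \<Longrightarrow> g \<in> Kc k p \<Longrightarrow> f - g \<in> Kc k p"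
  using keys_diff[of f g] unfolding Kc_def by auto
lemma Kc_mult: assumes "f \<in> Kc k p" "g \<in> Kc l q" shows "f * g \<in> Kc (k + l) (p + q)"
  unfolding Kc_def
proof (intro CollectI ballI)
  fix m assume "m \<in> Poly_Mapping.keys (f * g)"
  then obtain a b where ab: "m = a + b" "a \<in> Poly_Mapping.keys f" "b \<in> Poly_Mapping.keys g"
    using keys_mult[of f g] by auto
  show "wt m = k + l \<and> ind m = p + q"
    using assms ab unfolding Kc_def by (simp add: wt_add ind_add)
qed

lemma Kc_cst: "cst c \<in> Kc 0 0"
  by (simp add: Kc_def cst_def wt_def ind_def zero_mono)
lemma Kc_smult: "f \<in> Kc k p \<Longrightarrow> cst c * f \<in> Kc k p"
  using Kc_mult[OF Kc_cst] by fastforce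

lemma degs_Kc: assumes "f \<in> Kc k p" "f \<noteq> 0" shows "degs f = {(k,p)}"
proof -
  obtain m where m: "m \<in> Poly_Mapping.keys f" using assms(2) keys_eq_empty by blast
  show ?thesis using assms(1) m unfolding degs_def Kc_def by force
qed

lemma hcomp_Kc: assumes "f \<in> Kc k p" shows "hcomp k p f = f"
proof -
  have "{m \<in> Poly_Mapping.keys f. wt m = k \<and> ind m = p} = Poly_Mapping.keys f"
    using assms unfolding Kc_def by auto
  then show ?thesis unfolding hcomp_def using expand_single[of f] by simp
qed

lemma dU_zero: "(dU u ^^ r) 0 = 0"
  by (induction r) (simp_all add: dU_eq der_zero[OF Dlin_der])

lemma br_Kc:
  assumes "f \<in> Kc k p" "g \<in> Kc l q"
  shows "br u v n f g = brh u v n k p l q f g"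
proof (cases "f = 0 \<or> g = 0")
  case True
  then show ?thesis by (auto simp: br_def brh_def degs_def dU_zero)
next
  case False
  then show ?thesis using assms by (simp add: br_def degs_Kc hcomp_Kc)
qed

lemma brh_0: "brh u v 0 k p l q f g = f * g"
  by (simp add: brh_def)

lemma brh_1: "brh u v 1 k p l q f g =
   cst (of_int k + v * of_int p) * f * dU u g - cst (of_int l + v * of_int q) * dU u f * g"
proof -
  have e: "cst (- x - y) = - cst (x + y)" for x y by (simp add: cst_def single_uminus[symmetric])
  show ?thesis by (simp add: brh_def e)
qed

definition hom :: "K \<Rightarrow> bool" where "hom f \<longleftrightarrow> (\<exists>k p. f \<in> Kc k p)"

lemma hom_M[simp]: "hom (M m)" using M_Kc hom_def by blast
lemma hom_mult[simp]: "hom f \<Longrightarrow> hom g \<Longrightarrow> hom (f * g)" unfolding hom_def by (auto intro: Kc_mult)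
lemma hom_cst[simp]: "hom (cst c)" using Kc_cst hom_def by blast
lemma hom_one[simp]: "hom 1" using hom_cst[of 1] by simp
lemma hom_uminus[simp]: "hom f \<Longrightarrow> hom (- f)" using Kc_uminus hom_def by blast
lemma hom_pow[simp]: "hom f \<Longrightarrow> hom (f ^ n)"
  by (induction n) simp_all
lemma hom_gens[simp]: "hom E4" "hom E6" "hom F2" "hom A" "hom B" "hom Ainv"
  by (simp_all add: E4_M E6_M F2_M A_M B_M Ainv_M)

lemma Kc_one:
  assumes "\<And>m. wt m = k \<Longrightarrow> ind m = p \<Longrightarrow> m = m0" "f \<in> Kc k p"
  shows "f = cst (Poly_Mapping.lookup f m0) * M m0"
proof (rule poly_mapping_eqI)
  fix m
  show "Poly_Mapping.lookup f m = Poly_Mapping.lookup (cst (Poly_Mapping.lookup f m0) * M m0) m"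
  proof (cases "m \<in> Poly_Mapping.keys f")
    case True
    then have "m = m0" using assms unfolding Kc_def by blast
    then show ?thesis by (simp add: cst_M)
  next
    case False
    then show ?thesis by (auto simp: cst_M lookup_single when_def in_keys_iff)
  qed
qed

lemma Kc_two:
  assumes "\<And>m. wt m = k \<Longrightarrow> ind m = p \<Longrightarrow> m = m0 \<or> m = m1" "m0 \<noteq> m1" "f \<in> Kc k p"
  shows "f = cst (Poly_Mapping.lookup f m0) * M m0 + cst (Poly_Mapping.lookup f m1) * M m1"
proof (rule poly_mapping_eqI)
  fix m
  show "Poly_Mapping.lookup f m = Poly_Mapping.lookup (cst (Poly_Mapping.lookup f m0) * M m0 + cst (Poly_Mapping.lookup f m1) * M m1) m"
  proof (cases "m \<in> Poly_Mapping.keys f")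
    case True
    then have "m = m0 \<or> m = m1" using assms unfolding Kc_def by blast
    then show ?thesis using assms(2) by (auto simp: cst_M lookup_add lookup_single)
  next
    case False
    then show ?thesis by (auto simp: cst_M lookup_add lookup_single when_def in_keys_iff)
  qed
qed

lemma Kc_three:
  assumes "\<And>m. wt m = k \<Longrightarrow> ind m = p \<Longrightarrow> m = m0 \<or> m = m1 \<or> m = m2" "m0 \<noteq> m1" "m0 \<noteq> m2" "m1 \<noteq> m2"
    "f \<in> Kc k p"
  shows "f = cst (Poly_Mapping.lookup f m0) * M m0 + cst (Poly_Mapping.lookup f m1) * M m1
           + cst (Poly_Mapping.lookup f m2) * M m2"
proof (rule poly_mapping_eqI)
  fix m
  show "Poly_Mapping.lookup f m = Poly_Mapping.lookup (cst (Poly_Mapping.lookup f m0) * M m0 + cst (Poly_Mapping.lookup f m1) * M m1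
           + cst (Poly_Mapping.lookup f m2) * M m2) m"
  proof (cases "m \<in> Poly_Mapping.keys f")
    case True
    then have "m = m0 \<or> m = m1 \<or> m = m2" using assms unfolding Kc_def by blast
    then show ?thesis using assms(2-4) by (auto simp: cst_M lookup_add lookup_single)
  next
    case False
    then show ?thesis by (auto simp: cst_M lookup_add lookup_single when_def in_keys_iff)
  qed
qed

lemma deg_F2: "wt m = 2 \<Longrightarrow> ind m = 0 \<Longrightarrow> m = (0,0,-1,1)"
  by (cases m) (auto simp: wt_def ind_def; presburger)
lemma deg_A: "wt m = -2 \<Longrightarrow> ind m = 1 \<Longrightarrow> m = (0,0,1,0)"
  by (cases m) (auto simp: wt_def ind_def; presburger)
lemma deg_E4: "wt m = 4 \<Longrightarrow> ind m = 0 \<Longrightarrow> m = (1,0,0,0) \<or> m = (0,0,-2,2)"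
  by (cases m) (auto simp: wt_def ind_def; presburger)
lemma deg_E6: "wt m = 6 \<Longrightarrow> ind m = 0 \<Longrightarrow> m = (0,1,0,0) \<or> m = (1,0,-1,1) \<or> m = (0,0,-3,3)"
  by (cases m) (auto simp: wt_def ind_def; presburger)

locale miso =
  fixes \<phi> :: "K \<Rightarrow> K" and u v u' v' :: complex
  assumes bij: "bij \<phi>"
    and padd: "\<And>f g. \<phi> (f + g) = \<phi> f + \<phi> g"
    and psm: "\<And>c f. \<phi> (cst c * f) = cst c * \<phi> f"
    and pkc: "\<And>k p f. f \<in> Kc k p \<Longrightarrow> \<phi> f \<in> Kc k p"
    and pbr: "\<And>n f g. \<phi> (br u v n f g) = br u' v' n (\<phi> f) (\<phi> g)"
begin

lemma p0: "\<phi> 0 = 0" using padd[of 0 0] by simp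
lemma puminus: "\<phi> (- f) = - \<phi> f"
  using psm[of "-1" f] by (simp add: cst_uminus)
lemma pdiff: "\<phi> (f - g) = \<phi> f - \<phi> g"
  using padd[of f "- g"] by (simp add: puminus)

lemma pmult: assumes "hom f" "hom g" shows "\<phi> (f * g) = \<phi> f * \<phi> g"
proof -
  obtain k p l q where f: "f \<in> Kc k p" and g: "g \<in> Kc l q" using assms hom_def by blast
  have "\<phi> (br u v 0 f g) = br u' v' 0 (\<phi> f) (\<phi> g)" by (rule pbr)
  thus ?thesis using f g pkc[OF f] pkc[OF g] by (simp add: br_Kc brh_0)
qed

lemma pbr1:
  assumes f: "f \<in> Kc k p" and g: "g \<in> Kc l q"
  shows "\<phi> (cst (of_int k + v * of_int p) * f * Dlin u g - cst (of_int l + v * of_int q) * Dlin u f * g)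
       = cst (of_int k + v' * of_int p) * \<phi> f * Dlin u' (\<phi> g) - cst (of_int l + v' * of_int q) * Dlin u' (\<phi> f) * \<phi> g"
proof -
  have "\<phi> (brh u v 1 k p l q f g) = brh u' v' 1 k p l q (\<phi> f) (\<phi> g)"
    using pbr[of 1 f g] br_Kc[OF f g] br_Kc[OF pkc[OF f] pkc[OF g]] by simp
  thus ?thesis unfolding brh_1 dU_eq .
qed

lemma pinj: "\<phi> f = \<phi> g \<Longrightarrow> f = g" using bij bij_is_inj injD by metis

definition \<alpha> where "\<alpha> = Poly_Mapping.lookup (\<phi> A) (0,0,1,0)"
definition \<rho> where "\<rho> = Poly_Mapping.lookup (\<phi> F2) (0,0,-1,1)"
definition \<gamma> where "\<gamma> = Poly_Mapping.lookup (\<phi> E4) (1,0,0,0)"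
definition \<delta> where "\<delta> = Poly_Mapping.lookup (\<phi> E4) (0,0,-2,2)"
definition \<epsilon> where "\<epsilon> = Poly_Mapping.lookup (\<phi> E6) (0,1,0,0)"
definition \<zeta> where "\<zeta> = Poly_Mapping.lookup (\<phi> E6) (1,0,-1,1)"
definition \<eta> where "\<eta> = Poly_Mapping.lookup (\<phi> E6) (0,0,-3,3)"

lemma KcA: "A \<in> Kc (-2) 1" using M_Kc[of "(0,0,1,0)"] by (simp add: A_M wt_def ind_def)
lemma KcF2: "F2 \<in> Kc 2 0" using M_Kc[of "(0,0,-1,1)"] by (simp add: F2_M wt_def ind_def)
lemma KcE4: "E4 \<in> Kc 4 0" using M_Kc[of "(1,0,0,0)"] by (simp add: E4_M wt_def ind_def)
lemma KcE6: "E6 \<in> Kc 6 0" using M_Kc[of "(0,1,0,0)"] by (simp add: E6_M wt_def ind_def)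

lemma phiA: "\<phi> A = cst \<alpha> * A"
  unfolding \<alpha>_def A_M by (rule Kc_one[OF deg_A pkc[OF KcA[unfolded A_M]]])
lemma phiF2: "\<phi> F2 = cst \<rho> * F2"
  unfolding \<rho>_def F2_M by (rule Kc_one[OF deg_F2 pkc[OF KcF2[unfolded F2_M]]])
lemma F2F2: "F2 * F2 = M (0,0,-2,2)" by (simp add: F2_M M_mult numeral_2_eq_2)
lemma E4F2: "E4 * F2 = M (1,0,-1,1)" by (simp add: F2_M E4_M M_mult)
lemma F2F2F2: "F2 * F2 * F2 = M (0,0,-3,3)" by (simp add: F2_M M_mult numeral_3_eq_3)

lemma phiE4: "\<phi> E4 = cst \<gamma> * E4 + cst \<delta> * (F2 * F2)"
  unfolding \<gamma>_def \<delta>_def F2F2 E4_M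
  by (rule Kc_two[OF deg_E4 _ pkc[OF KcE4[unfolded E4_M]]]) simp_all
lemma phiE6: "\<phi> E6 = cst \<epsilon> * E6 + cst \<zeta> * (E4 * F2) + cst \<eta> * (F2 * F2 * F2)"
  unfolding \<epsilon>_def \<zeta>_def \<eta>_def E4F2 F2F2F2 E6_M
  by (rule Kc_three[OF deg_E6 _ _ _ pkc[OF KcE6[unfolded E6_M]]]) simp_all

end

lemma num_single: "numeral n * Poly_Mapping.single m c = Poly_Mapping.single m (numeral n * c)"
  by (metis mult_single single_numeral add_0)
lemma single_num: "Poly_Mapping.single m c * numeral n = Poly_Mapping.single m (c * numeral n)"
  by (metis mult_single single_numeral add_0_right)
lemma neg_single: "- Poly_Mapping.single m c = Poly_Mapping.single m (- c)"
  by (simp add: single_uminus)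
lemmas norm0 = E4_M E6_M F2_M A_M B_M Ainv_M M_def cst_def
lemmas norm1 = mult_single ring_distribs power2_eq_square power3_eq_cube num_single single_num neg_single
   lookup_add lookup_minus lookup_single when_def

lemmas homs = hom_M hom_mult hom_cst hom_uminus hom_pow hom_gens hom_one

context miso begin

lemma deg_0: "wt m = 0 \<Longrightarrow> ind m = 0 \<Longrightarrow> m = (0,0,0,0)"
  by (cases m) (auto simp: wt_def ind_def; presburger)

lemma pone: "\<phi> 1 = 1"
proof -
  have K1: "(1::K) \<in> Kc 0 0" using Kc_cst[of 1] by simp
  define l where "l = Poly_Mapping.lookup (\<phi> 1) (0,0,0,0)"
  have e: "\<phi> 1 = cst l" unfolding l_def
    using Kc_one[OF deg_0 pkc[OF K1]] by (simp add: M_zero)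
  have "\<phi> (1 * 1) = \<phi> 1 * \<phi> 1" by (rule pmult) simp_all
  hence "cst l = cst (l * l)" using e by (simp add: cst_mult)
  hence ll: "l = l * l" unfolding cst_def by (metis lookup_single_eq)
  have "l \<noteq> 0"
  proof
    assume "l = 0"
    hence "\<phi> 1 = \<phi> 0" using e p0 by simp
    hence "(1::K) = 0" by (rule pinj)
    thus False by simp
  qed
  hence "l = 1" using ll by (metis mult_cancel_left1)
  thus ?thesis using e by simp
qed

lemma pcst: "\<phi> (cst c) = cst c"
  using psm[of c 1] pone by simp

lemma phiB: "\<phi> B = cst (\<rho> * \<alpha>) * B"
proof -
  have "\<phi> B = \<phi> F2 * \<phi> A" unfolding B_F2A by (rule pmult) simp_all
  also have "\<dots> = cst (\<rho> * \<alpha>) * (F2 * A)" by (simp add: phiF2 phiA cst_mult algebra_simps)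
  finally show ?thesis by (simp add: B_F2A)
qed

lemmas phis = phiB pcst padd pdiff puminus psm pmult phiA phiF2 phiE4 phiE6
lemmas Ds = Dlin_add Dlin_mult Dlin_cst D_E4 D_E6 D_F2 D_A P4_def P6_def PF_def PA_def PB_def

lemma Q1: "\<phi> (cst 2 * F2 * Dlin u E4 - cst 4 * Dlin u F2 * E4) =
   cst 2 * \<phi> F2 * Dlin u' (\<phi> E4) - cst 4 * Dlin u' (\<phi> F2) * \<phi> E4"
  using pbr1[OF KcF2 KcE4] by (simp add: algebra_simps)

lemma Q2: "\<phi> (cst 2 * F2 * Dlin u E6 - cst 6 * Dlin u F2 * E6) =
   cst 2 * \<phi> F2 * Dlin u' (\<phi> E6) - cst 6 * Dlin u' (\<phi> F2) * \<phi> E6"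
  using pbr1[OF KcF2 KcE6] by (simp add: algebra_simps)

lemma Q3: "\<phi> (cst 2 * F2 * Dlin u A - cst (v - 2) * Dlin u F2 * A) =
   cst 2 * \<phi> F2 * Dlin u' (\<phi> A) - cst (v' - 2) * Dlin u' (\<phi> F2) * \<phi> A"
  using pbr1[OF KcF2 KcA] by (simp add: algebra_simps)

lemma Q4: "\<phi> (cst (v - 2) * A * Dlin u E4 - cst 4 * Dlin u A * E4) =
   cst (v' - 2) * \<phi> A * Dlin u' (\<phi> E4) - cst 4 * Dlin u' (\<phi> A) * \<phi> E4"
  using pbr1[OF KcA KcE4] by (simp add: algebra_simps)

lemma E1a: "\<gamma> = 0 \<or> \<gamma> = \<rho>"
proof -
  have e: "Poly_Mapping.lookup (\<phi> (cst 2 * F2 * Dlin u E4 - cst 4 * Dlin u F2 * E4)) (2,0,0,0) =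
     Poly_Mapping.lookup (cst 2 * \<phi> F2 * Dlin u' (\<phi> E4) - cst 4 * Dlin u' (\<phi> F2) * \<phi> E4) (2,0,0,0)"
    using Q1 by simp
  show ?thesis
    using e
    apply (simp only: Ds)
    apply (simp only: ring_distribs phis homs power2_eq_square)
    apply (simp only: Ds ring_distribs)
    apply (simp only: norm0)
    apply (simp add: norm1)
    done
qed

lemma E1b: "\<rho> = 0 \<or> \<epsilon> = \<gamma>"
proof -
  have e: "Poly_Mapping.lookup (\<phi> (cst 2 * F2 * Dlin u E4 - cst 4 * Dlin u F2 * E4)) (0,1,-1,1) =
     Poly_Mapping.lookup (cst 2 * \<phi> F2 * Dlin u' (\<phi> E4) - cst 4 * Dlin u' (\<phi> F2) * \<phi> E4) (0,1,-1,1)"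
    using Q1 by simp
  show ?thesis
    using e
    apply (simp only: Ds)
    apply (simp only: ring_distribs phis homs power2_eq_square)
    apply (simp only: Ds ring_distribs)
    apply (simp only: norm0)
    apply (simp add: norm1)
    done
qed

lemma E1c: "\<gamma> * (\<rho> * \<rho>) + (2 * (\<delta> * \<gamma>) - 2 * (\<rho> * \<zeta>)) = \<gamma> * \<rho>"
proof -
  have e: "Poly_Mapping.lookup (\<phi> (cst 2 * F2 * Dlin u E4 - cst 4 * Dlin u F2 * E4)) (1,0,-2,2) =
     Poly_Mapping.lookup (cst 2 * \<phi> F2 * Dlin u' (\<phi> E4) - cst 4 * Dlin u' (\<phi> F2) * \<phi> E4) (1,0,-2,2)"
    using Q1 by simp
  show ?thesis
    using e
    apply (simp only: Ds)
    apply (simp only: ring_distribs phis homs power2_eq_square)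
    apply (simp only: Ds ring_distribs)
    apply (simp only: norm0)
    apply (simp add: norm1)
    done
qed

lemma E2a: "\<gamma> * \<zeta> / 2 - \<rho> * (\<gamma> * \<gamma>) = \<rho> * \<zeta> / 3 - \<rho> * \<epsilon>"
proof -
  have e: "Poly_Mapping.lookup (\<phi> (cst 2 * F2 * Dlin u E6 - cst 6 * Dlin u F2 * E6)) (2,0,-1,1) =
     Poly_Mapping.lookup (cst 2 * \<phi> F2 * Dlin u' (\<phi> E6) - cst 6 * Dlin u' (\<phi> F2) * \<phi> E6) (2,0,-1,1)"
    using Q2 by simp
  show ?thesis
    using e
    apply (simp only: Ds)
    apply (simp only: ring_distribs phis homs power2_eq_square)
    apply (simp only: Ds ring_distribs)
    apply (simp only: norm0)
    apply (simp add: norm1)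
    done
qed

lemma E2b: "\<epsilon> * (\<rho> * \<rho>) / 2 + \<delta> * \<epsilon> / 2 = \<epsilon> * \<rho> / 2 - 2 * \<rho> * \<zeta> / 3"
proof -
  have e: "Poly_Mapping.lookup (\<phi> (cst 2 * F2 * Dlin u E6 - cst 6 * Dlin u F2 * E6)) (0,1,-2,2) =
     Poly_Mapping.lookup (cst 2 * \<phi> F2 * Dlin u' (\<phi> E6) - cst 6 * Dlin u' (\<phi> F2) * \<phi> E6) (0,1,-2,2)"
    using Q2 by simp
  show ?thesis
    using e
    apply (simp only: Ds)
    apply (simp only: ring_distribs phis homs power2_eq_square)
    apply (simp only: Ds ring_distribs)
    apply (simp only: norm0)
    apply (simp add: norm1)
    done
qed

lemma E3: "v * \<gamma> * \<alpha> * 12 - 24 * (\<gamma> * \<alpha>) = v' * \<rho> * \<alpha> * 12 - 24 * (\<rho> * \<alpha>)"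
proof -
  have e: "Poly_Mapping.lookup (\<phi> (cst 2 * F2 * Dlin u A - cst (v - 2) * Dlin u F2 * A)) (1,0,1,0) =
     Poly_Mapping.lookup (cst 2 * \<phi> F2 * Dlin u' (\<phi> A) - cst (v' - 2) * Dlin u' (\<phi> F2) * \<phi> A) (1,0,1,0)"
    using Q3 by simp
  show ?thesis
    using e
    apply (simp only: Ds)
    apply (simp only: ring_distribs phis homs power2_eq_square)
    apply (simp only: Ds ring_distribs)
    apply (simp only: norm0)
    apply (simp add: norm1)
    done
qed

lemma E4: "(v * \<alpha> * (\<gamma> * \<rho>) - 2 * \<alpha> * (\<gamma> * \<rho>)) / 3 - (v * \<alpha> * \<zeta> - 2 * \<alpha> * \<zeta>) / 3 -
     4 * (u * (\<rho> * \<alpha>)) * \<gamma> =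
     (v' * \<alpha> * \<gamma> - 2 * \<alpha> * \<gamma>) / 3 - (2 * (v' * \<alpha> * \<delta>) - 4 * (\<alpha> * \<delta>)) / 12 -
     4 * (\<alpha> * u') * \<gamma>"
proof -
  have e: "Poly_Mapping.lookup (\<phi> (cst (v - 2) * A * Dlin u E4 - cst 4 * Dlin u A * E4)) (1,0,0,1) =
     Poly_Mapping.lookup (cst (v' - 2) * \<phi> A * Dlin u' (\<phi> E4) - cst 4 * Dlin u' (\<phi> A) * \<phi> E4) (1,0,0,1)"
    using Q4 by simp
  show ?thesis
    using e
    apply (simp only: Ds)
    apply (simp only: ring_distribs phis homs power2_eq_square)
    apply (simp only: Ds ring_distribs)
    apply (simp only: norm0)
    apply (simp add: norm1)
    done
qed

lemma M_nz: "M m \<noteq> 0"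
  unfolding M_def by (metis lookup_single_eq lookup_zero one_neq_zero)

lemma rho_nz: "\<rho> \<noteq> 0"
proof
  assume "\<rho> = 0"
  hence "\<phi> F2 = \<phi> 0" by (simp add: phiF2 p0)
  hence "F2 = 0" by (rule pinj)
  thus False by (simp add: F2_M M_nz)
qed

lemma alpha_nz: "\<alpha> \<noteq> 0"
proof
  assume "\<alpha> = 0"
  hence "\<phi> A = \<phi> 0" by (simp add: phiA p0)
  hence "A = 0" by (rule pinj)
  thus False by (simp add: A_M M_nz)
qed

lemma gamma_nz: "\<gamma> \<noteq> 0"
proof
  assume g0: "\<gamma> = 0"
  define c where "c = \<delta> / (\<rho> * \<rho>)"
  have "\<phi> (cst c * (F2 * F2)) = cst c * (\<phi> F2 * \<phi> F2)"
    by (simp add: psm pmult)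
  also have "\<dots> = cst (c * (\<rho> * \<rho>)) * (F2 * F2)"
    by (simp add: phiF2 cst_mult algebra_simps)
  also have "\<dots> = \<phi> E4" using rho_nz g0 by (simp add: phiE4 c_def)
  finally have "E4 = cst c * (F2 * F2)" by (rule pinj[symmetric])
  hence "Poly_Mapping.lookup E4 (1,0,0,0) = Poly_Mapping.lookup (cst c * (F2 * F2)) (1,0,0,0)" by simp
  thus False by (simp add: F2F2 E4_M cst_def M_def mult_single lookup_single)
qed

lemma final: "u = u' \<and> v = v'"
proof -
  have g: "\<gamma> = \<rho>" using E1a gamma_nz by blast
  have e: "\<epsilon> = \<rho>" using E1b rho_nz g by simp
  have c1: "\<rho> * \<rho> + 2 * \<delta> - 2 * \<zeta> = \<rho>"
  proof -
    have "\<rho> * (\<rho> * \<rho> + 2 * \<delta> - 2 * \<zeta>) = \<rho> * \<rho>"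
      using E1c g by (simp add: algebra_simps)
    thus ?thesis using rho_nz by (metis mult_cancel_left)
  qed
  have c2: "\<zeta> = 6 * (\<rho> * \<rho> - \<rho>)"
  proof -
    have "\<rho> * (\<zeta> / 2 - \<rho> * \<rho>) = \<rho> * (\<zeta> / 3 - \<rho>)"
      using E2a g e by (simp add: algebra_simps)
    hence "\<zeta> / 2 - \<rho> * \<rho> = \<zeta> / 3 - \<rho>" using rho_nz by (metis mult_cancel_left)
    thus ?thesis by (simp add: field_simps)
  qed
  have c3: "\<rho> * \<rho> + \<delta> = \<rho> - 4 * \<zeta> / 3"
  proof -
    have "\<rho> * (\<rho> * \<rho> + \<delta>) = \<rho> * (\<rho> - 4 * \<zeta> / 3)"
      using E2b e by (simp add: algebra_simps)
    thus ?thesis using rho_nz by (metis mult_cancel_left)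
  qed
  have "29 * (\<rho> * \<rho> - \<rho>) = 0"
  proof -
    have d: "\<delta> = \<zeta> - (\<rho> * \<rho> - \<rho>) / 2" using c1 by (simp add: field_simps)
    show ?thesis using c3 unfolding d c2 by (simp add: field_simps)
  qed
  hence "\<rho> * \<rho> = \<rho> * 1" by simp
  hence r1: "\<rho> = 1" using rho_nz by (metis mult_cancel_left)
  hence z0: "\<zeta> = 0" using c2 by simp
  hence d0: "\<delta> = 0" using c1 r1 by simp
  have vv: "v = v'"
  proof -
    have "\<alpha> * (12 * v - 24) = \<alpha> * (12 * v' - 24)" using E3 g r1 by (simp add: algebra_simps)
    thus ?thesis using alpha_nz by simp
  qed
  have uu: "u = u'"
  proof -
    have h: "(v * \<alpha> - 2 * \<alpha>) / 3 - 4 * u * \<alpha> = (v * \<alpha> - 2 * \<alpha>) / 3 - 4 * \<alpha> * u'"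
      using E4 g r1 z0 d0 vv by (simp add: mult.commute mult.left_commute)
    hence "4 * u * \<alpha> = 4 * \<alpha> * u'" by simp
    thus ?thesis using alpha_nz by simp
  qed
  show ?thesis using uu vv by simp
qed

end

theorem mainTheorem13:
  fixes u v u' v' :: complex
  shows "modular_iso (br u v) (br u' v') \<longleftrightarrow> (u, v) = (u', v')"
proof
  assume "modular_iso (br u v) (br u' v')"
  then obtain \<phi> where "bij \<phi>" "\<forall>f g. \<phi> (f + g) = \<phi> f + \<phi> g" "\<forall>c f. \<phi> (cst c * f) = cst c * \<phi> f"
    "\<forall>k p f. f \<in> Kc k p \<longrightarrow> \<phi> f \<in> Kc k p" "\<forall>n f g. \<phi> (br u v n f g) = br u' v' n (\<phi> f) (\<phi> g)"
    unfolding modular_iso_def by blast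
  then interpret miso \<phi> u v u' v' by unfold_locales auto
  show "(u, v) = (u', v')" using final by simp
next
  assume "(u, v) = (u', v')"
  thus "modular_iso (br u v) (br u' v')"
    unfolding modular_iso_def by (intro exI[of _ id]) auto
qed

end
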